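(* For monomials $m,m'$ of $\mathcal{A}$ with coefficient $1$, we have $m\le m'$ if and only if $\mathbf{w}(m)\le\mathbf{w}(m')$. Furthermore, the poset $(\mathbf{Z}_{\ge0}^r)^\star$ is noetherian: for any sequence $x_1,x_2,\dots$ of its elements there exist $i<j$ with $x_i\le x_j$.
   Context: Let $\mathbf{k}$ be a commutative noetherian ring, $r$ a positive integer, $x_1,\dots,x_r$ the standard basis of $\mathbf{k}^r$ (so $\mathrm{Sym}^d\mathbf{k}^r$ is the space of degree-$d$ polynomials in $x_1,\dots,x_r$). Let $\mathcal{A}=\bigoplus_{n,d\ge0}\mathcal{A}_{d,n}$ with $\mathcal{A}_{d,n}=(\mathrm{Sym}^d\mathbf{k}^r)^{\otimes n}$ (tensor over $\mathbf{k}$). A split $\sigma$ of $[n+m]$ is a pair of a subset $\{i_1<\cdots<i_n\}$ of $[n+m]=\{1,\dots,n+m\}$ and its complement $\{j_1<\cdots<j_m\}$; it defines the shuffle product $\cdot_\sigma:\mathcal{A}_{d,n}\otimes\mathcal{A}_{d,m}\to\mathcal{A}_{d,n+m}$, $(u_1\otimes\cdots\otimes u_n)\cdot_\sigma(v_1\otimes\cdots\otimes v_m)=w_1\otimes\cdots\otimes w_{n+m}$ with $w_{i_k}=u_k$, $w_{j_k}=v_k$ (and $f\cdot_\sigma g=0$ if bidegrees do not match $\sigma$). The product $*:\mathcal{A}_{d,n}\otimes\mathcal{A}_{e,n}\to\mathcal{A}_{d+e,n}$ multiplies factorwise, $(u_1\otimes\cdots\otimes u_n)*(v_1\otimes\cdots\otimes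 v_n)=u_1v_1\otimes\cdots\otimes u_nv_n$, and all other products are $0$. An ideal of $\mathcal{A}$ is a bihomogeneous subspace $I$ with $g*f\in I$ and $g\cdot_\sigma f\in I$ for all $f\in I$, $g\in\mathcal{A}$ and splits $\sigma$. A monomial is an element $w_1\otimes\cdots\otimes w_n$ with each $w_i$ a scalar multiple of a monomial $x_{j_1}\cdots x_{j_d}$. For monomials $m,m'$ with coefficient $1$, $m\le m'$ means $m'$ lies in the ideal generated by $m$. Order $\mathbf{Z}_{\ge0}^r$ pointwise. $(\mathbf{Z}_{\ge0}^r)^\star$ is the set of finite words with letters in $\mathbf{Z}^r_{\ge0}$, with $(w_1,\dots,w_n)\le(w'_1,\dots,w'_{m})$ iff there exist $1\le i_1<\cdots<i_n\le m$ with $w_j\le w'_{i_j}$ for all $j$. For a monomial $m=w_1\otimes\cdots\otimes w_n$, $\mathbf{w}(m)$ is the word of exponent vectors of $w_1,\dots,w_n$. *)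

theory Defs
  imports Main
begin

definition ring_ideal :: "'k::comm_ring_1 set \<Rightarrow> bool" where
  "ring_ideal I \<longleftrightarrow> 0 \<in> I \<and> (\<forall>a\<in>I. \<forall>b\<in>I. a + b \<in> I) \<and> (\<forall>a\<in>I. \<forall>c. c * a \<in> I)"

definition noetherian_ring :: "'k::comm_ring_1 itself \<Rightarrow> bool" where
  "noetherian_ring _ \<longleftrightarrow>
     (\<forall>F :: nat \<Rightarrow> 'k set. (\<forall>n. ring_ideal (F n)) \<longrightarrow> (\<forall>n. F n \<subseteq> F (Suc n))
        \<longrightarrow> (\<exists>N. \<forall>n\<ge>N. F n = F N))"

text \<open>Exponent vectors in Z_{>=0}^r are lists of naturals of length r.
  A basis index of A is a pair (d, w): w is a word (list) of exponent vectors,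
  each of total degree d; it indexes the monomial w_1 (x) ... (x) w_n in A_{d,n},
  n = length w.  (For n = 0 the index (d, []) is the unit 1 of A_{d,0} = k.)
  Elements of A are finitely supported k-valued functions on valid indices.\<close>

type_synonym idx = "nat \<times> nat list list"

definition valid_idx :: "nat \<Rightarrow> idx \<Rightarrow> bool" where
  "valid_idx r i \<longleftrightarrow> (\<forall>v\<in>set (snd i). length v = r \<and> sum_list v = fst i)"

definition supp :: "(idx \<Rightarrow> 'k::zero) \<Rightarrow> idx set" where
  "supp f = {i. f i \<noteq> 0}"

definition alg :: "nat \<Rightarrow> (idx \<Rightarrow> 'k::comm_ring_1) set" where
  "alg r = {f. finite (supp f) \<and> (\<forall>i. f i \<noteq> 0 \<longrightarrow> valid_idx r i)}"

definition basis :: "idx \<Rightarrow> idx \<Rightarrow> 'k::comm_ring_1" where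
  "basis i = (\<lambda>j. if j = i then 1 else 0)"

text \<open>A split of [n+m] is encoded as a boolean list of length n+m, True marking
  the positions i_1<...<i_n (taken from the first factor).\<close>

fun merge :: "bool list \<Rightarrow> 'a list \<Rightarrow> 'a list \<Rightarrow> 'a list" where
  "merge [] xs ys = []"
| "merge (True # bs) (x # xs) ys = x # merge bs xs ys"
| "merge (False # bs) xs (y # ys) = y # merge bs xs ys"
| "merge (True # bs) [] ys = []"
| "merge (False # bs) xs [] = []"

definition shuffle_prod :: "bool list \<Rightarrow> (idx \<Rightarrow> 'k::comm_ring_1) \<Rightarrow> (idx \<Rightarrow> 'k) \<Rightarrow> (idx \<Rightarrow> 'k)" where
  "shuffle_prod bs f g = (\<lambda>(e, w). \<Sum>p\<in>supp f. \<Sum>q\<in>supp g.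
     if fst p = e \<and> fst q = e \<and> length (snd p) = count_list bs True
        \<and> length (snd q) = count_list bs False \<and> merge bs (snd p) (snd q) = w
     then f p * g q else 0)"

definition star_prod :: "(idx \<Rightarrow> 'k::comm_ring_1) \<Rightarrow> (idx \<Rightarrow> 'k) \<Rightarrow> (idx \<Rightarrow> 'k)" where
  "star_prod f g = (\<lambda>(c, w). \<Sum>p\<in>supp f. \<Sum>q\<in>supp g.
     if length (snd p) = length (snd q) \<and> fst p + fst q = c
        \<and> map2 (\<lambda>a b. map2 (+) a b) (snd p) (snd q) = w
     then f p * g q else 0)"

definition component :: "nat \<Rightarrow> nat \<Rightarrow> (idx \<Rightarrow> 'k::zero) \<Rightarrow> (idx \<Rightarrow> 'k)" where
  "component d n f = (\<lambda>i. if fst i = d \<and> length (snd i) = n then f i else 0)"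

definition is_ideal :: "nat \<Rightarrow> (idx \<Rightarrow> 'k::comm_ring_1) set \<Rightarrow> bool" where
  "is_ideal r I \<longleftrightarrow> I \<subseteq> alg r \<and> (\<lambda>_. 0) \<in> I
     \<and> (\<forall>f\<in>I. \<forall>g\<in>I. (\<lambda>i. f i + g i) \<in> I)
     \<and> (\<forall>f\<in>I. \<forall>c. (\<lambda>i. c * f i) \<in> I)
     \<and> (\<forall>f\<in>I. \<forall>d n. component d n f \<in> I)
     \<and> (\<forall>f\<in>I. \<forall>g\<in>alg r. star_prod g f \<in> I)
     \<and> (\<forall>f\<in>I. \<forall>g\<in>alg r. \<forall>bs. shuffle_prod bs g f \<in> I)"

definition ideal_gen :: "nat \<Rightarrow> (idx \<Rightarrow> 'k::comm_ring_1) set \<Rightarrow> (idx \<Rightarrow> 'k) set" where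
  "ideal_gen r S = \<Inter> {I. is_ideal r I \<and> S \<subseteq> I}"

definition mono_le :: "nat \<Rightarrow> (idx \<Rightarrow> 'k::comm_ring_1) \<Rightarrow> (idx \<Rightarrow> 'k) \<Rightarrow> bool" where
  "mono_le r m m' \<longleftrightarrow> m' \<in> ideal_gen r {m}"

definition letter_le :: "nat list \<Rightarrow> nat list \<Rightarrow> bool" where
  "letter_le a b \<longleftrightarrow> list_all2 (\<le>) a b"

definition word_le :: "nat list list \<Rightarrow> nat list list \<Rightarrow> bool" where
  "word_le u v \<longleftrightarrow> (\<exists>f. strict_mono_on {..<length u} f \<and>
      (\<forall>j<length u. f j < length v \<and> letter_le (u ! j) (v ! f j)))"

end

theory Submission
  imports Defs "HOL-Library.Sublist" "HOL-Library.Ramsey" "HOL-Library.Infinite_Set"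
begin


definition good :: "('a \<Rightarrow> 'a \<Rightarrow> bool) \<Rightarrow> (nat \<Rightarrow> 'a) \<Rightarrow> bool" where
  "good P f \<longleftrightarrow> (\<exists>i j. i < j \<and> P (f i) (f j))"

definition wqo_on :: "('a \<Rightarrow> 'a \<Rightarrow> bool) \<Rightarrow> 'a set \<Rightarrow> bool" where
  "wqo_on P A \<longleftrightarrow> (\<forall>f. (\<forall>i. f i \<in> A) \<longrightarrow> good P f)"

lemma wqo_hom:
  fixes f :: "nat \<Rightarrow> 'a"
  assumes w: "wqo_on P A" and fA: "\<forall>i. f i \<in> A"
  shows "\<exists>\<phi>::nat\<Rightarrow>nat. strict_mono \<phi> \<and> (\<forall>i j. i < j \<longrightarrow> P (f (\<phi> i)) (f (\<phi> j)))"
proof -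
  define c where "c X = (if P (f (Min X)) (f (Max X)) then 0 else (1::nat))" for X :: "nat set"
  have "\<forall>x\<in>(UNIV::nat set). \<forall>y\<in>UNIV. x \<noteq> y \<longrightarrow> c {x, y} < 2" by (simp add: c_def)
  from Ramsey2[OF _ this] obtain Y t where Y: "infinite Y" "t < 2"
    and hom: "\<forall>x\<in>Y. \<forall>y\<in>Y. x\<noteq>y \<longrightarrow> c {x, y} = t" by auto
  define \<phi> where "\<phi> = enumerate Y"
  have sm: "strict_mono \<phi>" unfolding \<phi>_def strict_mono_def using Y(1) enumerate_mono by blast
  have inY: "\<phi> i \<in> Y" for i unfolding \<phi>_def using Y(1) enumerate_in_set by blast
  have cval: "c {\<phi> i, \<phi> j} = (if P (f (\<phi> i)) (f (\<phi> j)) then 0 else 1)" if "i < j" for i j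
  proof -
    have "\<phi> i < \<phi> j" using sm that strict_mono_def by blast
    then have "Min {\<phi> i, \<phi> j} = \<phi> i" "Max {\<phi> i, \<phi> j} = \<phi> j" by auto
    then show ?thesis by (simp add: c_def)
  qed
  have ct: "c {\<phi> i, \<phi> j} = t" if "i < j" for i j
  proof -
    have "\<phi> i < \<phi> j" using sm that by (simp add: strict_mono_less)
    then have "\<phi> i \<noteq> \<phi> j" by simp
    then show ?thesis using bspec[OF bspec[OF hom inY[of i]] inY[of j]] by simp
  qed
  show ?thesis
  proof (cases "t = 0")
    case True
    have hh: "\<forall>i j. i < j \<longrightarrow> P (f (\<phi> i)) (f (\<phi> j))"
    proof (intro allI impI)
      fix i j :: nat assume "i < j"
      then have "c {\<phi> i, \<phi> j} = 0" using ct True by simp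
      then show "P (f (\<phi> i)) (f (\<phi> j))" using cval[OF \<open>i<j\<close>] by (simp split: if_splits)
    qed
    show ?thesis
      apply (rule exI[where x=\<phi>])
      apply (rule conjI[OF sm hh])
      done
  next
    case False
    have "good P (f \<circ> \<phi>)" using w[unfolded wqo_on_def, rule_format, of "f \<circ> \<phi>"] fA by simp
    then obtain i j where "i < j" "P (f (\<phi> i)) (f (\<phi> j))" unfolding good_def by auto
    then have "c {\<phi> i, \<phi> j} = 0" using cval by simp
    then show ?thesis using ct \<open>i<j\<close> False by simp
  qed
qed

lemma wqo_nat: "wqo_on (\<le>) (UNIV :: nat set)"
  unfolding wqo_on_def good_def
proof (intro allI impI)
  fix f :: "nat \<Rightarrow> nat"
  define m where "m = (LEAST x. x \<in> range f)"
  have "m \<in> range f" unfolding m_def by (rule LeastI_ex) auto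
  then obtain i where i: "f i = m" by auto
  have "f i \<le> f (Suc i)" unfolding i m_def by (rule Least_le) auto
  then show "\<exists>i j. i < j \<and> f i \<le> f j" by blast
qed

lemma wqo_letters: "wqo_on letter_le {v. length v = n}"
proof (induction n)
  case 0
  then show ?case unfolding wqo_on_def good_def letter_le_def
    by (intro allI impI exI[of _ 0] exI[of _ 1]) auto
next
  case (Suc n)
  show ?case unfolding wqo_on_def
  proof (intro allI impI)
    fix f :: "nat \<Rightarrow> nat list" assume fA: "\<forall>i. f i \<in> {v. length v = Suc n}"
    obtain \<phi> :: "nat \<Rightarrow> nat" where sm: "strict_mono \<phi>" and hd: "\<forall>i j. i < j \<longrightarrow> hd (f (\<phi> i)) \<le> hd (f (\<phi> j))"
      using wqo_hom[OF wqo_nat, of "\<lambda>i. hd (f i)"] by auto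
    have "\<forall>i. tl (f (\<phi> i)) \<in> {v. length v = n}" using fA by simp
    then have "good letter_le (\<lambda>i. tl (f (\<phi> i)))" using mp[OF spec[OF Suc.IH[unfolded wqo_on_def], of "\<lambda>i. tl (f (\<phi> i))"]] by simp
    then obtain i j where ij: "i < j" "letter_le (tl (f (\<phi> i))) (tl (f (\<phi> j)))"
      unfolding good_def by auto
    have e: "f x = hd (f x) # tl (f x)" for x using fA
      using fA[rule_format, of x] by (cases "f x") auto
    have "letter_le (f (\<phi> i)) (f (\<phi> j))"
    proof -
      have "hd (f (\<phi> i)) \<le> hd (f (\<phi> j))" using hd ij(1) by blast
      moreover have "list_all2 (\<le>) (tl (f (\<phi> i))) (tl (f (\<phi> j)))" using ij(2) unfolding letter_le_def .
      ultimately have "list_all2 (\<le>) (hd (f (\<phi> i)) # tl (f (\<phi> i))) (hd (f (\<phi> j)) # tl (f (\<phi> j)))"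
        by simp
      then show ?thesis using e[of "\<phi> i", symmetric] e[of "\<phi> j", symmetric] unfolding letter_le_def by simp
    qed
    moreover have "\<phi> i < \<phi> j" using sm ij strict_mono_def by blast
    ultimately show "good letter_le f" unfolding good_def by blast
  qed
qed



lemma higman:
  assumes w: "wqo_on P A"
  shows "wqo_on (list_emb P) (lists A)"
proof (rule ccontr)
  assume nw: "\<not> wqo_on (list_emb P) (lists A)"
  define bad where "bad f \<longleftrightarrow> (\<forall>i. f i \<in> lists A) \<and> \<not> good (list_emb P) f" for f :: "nat \<Rightarrow> 'a list"
  define ext where "ext ps f \<longleftrightarrow> bad f \<and> (\<forall>i<length ps. f i = ps ! i)" for ps f
  define nxt where "nxt ps = (SOME w. \<exists>f. ext ps f \<and> f (length ps) = w \<and>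
      (\<forall>g. ext ps g \<longrightarrow> length w \<le> length (g (length ps))))" for ps
  have minex: "\<exists>f. ext ps f \<and> (\<forall>g. ext ps g \<longrightarrow> length (f (length ps)) \<le> length (g (length ps)))"
    if "\<exists>f. ext ps f" for ps
  proof -
    let ?Q = "\<lambda>l. \<exists>f. ext ps f \<and> length (f (length ps)) = l"
    from that obtain f0 where "ext ps f0" by blast
    then have "?Q (length (f0 (length ps)))" by blast
    then have "?Q (LEAST l. ?Q l)" by (rule LeastI)
    then obtain f where f: "ext ps f" "length (f (length ps)) = (LEAST l. ?Q l)" by blast
    have "length (f (length ps)) \<le> length (g (length ps))" if "ext ps g" for g
      unfolding f(2) by (rule Least_le) (use that in blast)
    then show ?thesis using f(1) by blast
  qed
  have nxt: "(\<exists>f. ext (ps @ [nxt ps]) f) \<and> (\<forall>g. ext ps g \<longrightarrow> length (nxt ps) \<le> length (g (length ps)))"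
    if "\<exists>f. ext ps f" for ps
  proof -
    have "\<exists>w f. ext ps f \<and> f (length ps) = w \<and>
      (\<forall>g. ext ps g \<longrightarrow> length w \<le> length (g (length ps)))" using minex[OF that] by blast
    then have "\<exists>f. ext ps f \<and> f (length ps) = nxt ps \<and>
      (\<forall>g. ext ps g \<longrightarrow> length (nxt ps) \<le> length (g (length ps)))"
      unfolding nxt_def by (rule someI_ex)
    then obtain f where f: "ext ps f" "f (length ps) = nxt ps"
      and mn: "\<forall>g. ext ps g \<longrightarrow> length (nxt ps) \<le> length (g (length ps))" by blast
    have "ext (ps @ [nxt ps]) f" using f unfolding ext_def
      by (auto simp: nth_append less_Suc_eq)
    then show ?thesis using mn by blast
  qed
  define pre where "pre n = ((\<lambda>ps. ps @ [nxt ps]) ^^ n) []" for n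
  define m where "m n = nxt (pre n)" for n
  have pre_ex: "\<exists>f. ext (pre n) f" for n
  proof (induction n)
    case 0
    from nw obtain f where "\<forall>i. f i \<in> lists A" "\<not> good (list_emb P) f" unfolding wqo_on_def by blast
    then have "ext [] f" unfolding ext_def bad_def by simp
    then show ?case unfolding pre_def by auto
  next
    case (Suc n)
    then show ?case using nxt[OF Suc] unfolding pre_def m_def by simp
  qed
  have pre_eq: "pre n = map m [0..<n]" for n
    by (induction n) (simp_all add: pre_def m_def)
  have ext_iff: "ext (pre n) g \<longleftrightarrow> bad g \<and> (\<forall>i<n. g i = m i)" for n g
    unfolding ext_def pre_eq by auto
  have K1: "\<exists>f. bad f \<and> (\<forall>i\<le>n. f i = m i)" for n
  proof -
    obtain f where "ext (pre (Suc n)) f" using pre_ex by blast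
    then show ?thesis unfolding ext_iff by (auto simp: less_Suc_eq_le)
  qed
  have K2: "length (m n) \<le> length (g n)" if "bad g" "\<forall>i<n. g i = m i" for n g
  proof -
    have "ext (pre n) g" using that ext_iff by blast
    then show ?thesis using nxt[OF pre_ex[of n]] unfolding m_def
      by (metis length_map diff_zero length_upt pre_eq)
  qed
  have mA: "m i \<in> lists A" for i
  proof -
    obtain f where "bad f" "\<forall>k\<le>i. f k = m k" using K1 by blast
    then show ?thesis unfolding bad_def by (metis order_refl)
  qed
  have mbad: "\<not> list_emb P (m i) (m j)" if "i < j" for i j
  proof -
    obtain f where f: "bad f" "\<forall>k\<le>j. f k = m k" using K1 by blast
    then have "\<not> list_emb P (f i) (f j)" using that unfolding bad_def good_def by blast
    then show ?thesis using f(2) that by simp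
  qed
  have mne: "m i \<noteq> []" for i
    using mbad[of i "Suc i"] by auto
  define h where "h i = hd (m i)" for i
  define t where "t i = tl (m i)" for i
  have mht: "m i = h i # t i" for i using mne[of i] unfolding h_def t_def by simp
  have hA: "\<forall>i. h i \<in> A" using mA mht by (metis Cons_in_lists_iff)
  obtain \<phi> :: "nat \<Rightarrow> nat" where sm: "strict_mono \<phi>" and hle: "\<forall>i j. i < j \<longrightarrow> P (h (\<phi> i)) (h (\<phi> j))"
    using wqo_hom[OF w hA] by blast
  define g where "g i = (if i < \<phi> 0 then m i else t (\<phi> (i - \<phi> 0)))" for i
  have tA: "t i \<in> lists A" for i using mA[of i] mht[of i] by (metis Cons_in_lists_iff)
  have gA: "\<forall>i. g i \<in> lists A" unfolding g_def using mA tA by simp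
  have "length (g (\<phi> 0)) < length (m (\<phi> 0))" unfolding g_def using mht[of "\<phi> 0"] by simp
  then have "\<not> bad g" using K2[of g "\<phi> 0"] unfolding g_def by fastforce
  then obtain i j where ij: "i < j" "list_emb P (g i) (g j)" using gA unfolding bad_def good_def by blast
  have phi_ge: "\<phi> 0 \<le> \<phi> k" for k using sm by (simp add: strict_mono_less_eq)
  have phi_id: "k \<le> \<phi> k" for k using sm by (simp add: strict_mono_imp_increasing)
  show False
  proof (cases "j < \<phi> 0")
    case True
    then show False using ij mbad unfolding g_def by auto
  next
    case False
    define l where "l = j - \<phi> 0"
    have gj: "g j = t (\<phi> l)" unfolding g_def l_def using False by simp
    show False
    proof (cases "i < \<phi> 0")
      case True
      have "list_emb P (m i) (t (\<phi> l))" using ij True gj unfolding g_def by simp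
      then have "list_emb P (m i) (m (\<phi> l))" using mht by (metis list_emb_Cons)
      moreover have "i < \<phi> l" using True phi_ge[of l] by simp
      ultimately show False using mbad by blast
    next
      case False
      define k where "k = i - \<phi> 0"
      have gi: "g i = t (\<phi> k)" unfolding g_def k_def using False by simp
      have kl: "k < l" using ij(1) False \<open>\<not> j < \<phi> 0\<close> unfolding k_def l_def by simp
      have "list_emb P (t (\<phi> k)) (t (\<phi> l))" using ij gi gj by simp
      moreover have "P (h (\<phi> k)) (h (\<phi> l))" using hle kl by blast
      ultimately have "list_emb P (m (\<phi> k)) (m (\<phi> l))" using mht by (metis list_emb_Cons2)
      moreover have "\<phi> k < \<phi> l" using sm kl by (simp add: strict_mono_less)
      ultimately show False using mbad by blast
    qed
  qed
qed



lemma emb_word_le: "list_emb letter_le u v \<Longrightarrow> word_le u v"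
proof (induction rule: list_emb.induct)
  case (list_emb_Nil ys)
  then show ?case unfolding word_le_def by (auto simp: strict_mono_on_def)
next
  case (list_emb_Cons xs ys y)
  then obtain f where f: "strict_mono_on {..<length xs} f"
    "\<forall>j<length xs. f j < length ys \<and> letter_le (xs ! j) (ys ! f j)" unfolding word_le_def by blast
  have "strict_mono_on {..<length xs} (\<lambda>j. Suc (f j))" using f(1) by (auto simp: strict_mono_on_def)
  moreover have "\<forall>j<length xs. Suc (f j) < length (y#ys) \<and> letter_le (xs ! j) ((y#ys) ! Suc (f j))"
    using f(2) by simp
  ultimately show ?case unfolding word_le_def by blast
next
  case (list_emb_Cons2 x y xs ys)
  then obtain f where f: "strict_mono_on {..<length xs} f"
    "\<forall>j<length xs. f j < length ys \<and> letter_le (xs ! j) (ys ! f j)" unfolding word_le_def by blast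
  define g where "g j = (case j of 0 \<Rightarrow> 0 | Suc k \<Rightarrow> Suc (f k))" for j
  have "strict_mono_on {..<length (x#xs)} g"
    unfolding strict_mono_on_def
  proof (intro allI impI)
    fix a b assume ab: "a \<in> {..<length (x#xs)} \<and> b \<in> {..<length (x#xs)} \<and> a < b"
    then obtain b' where b: "b = Suc b'" by (cases b) auto
    show "g a < g b"
    proof (cases a)
      case 0 then show ?thesis using b by (simp add: g_def)
    next
      case (Suc a')
      then have "f a' < f b'" using f(1) ab b by (auto simp: strict_mono_on_def)
      then show ?thesis using Suc b by (simp add: g_def)
    qed
  qed
  moreover have "\<forall>j<length (x#xs). g j < length (y#ys) \<and> letter_le ((x#xs) ! j) ((y#ys) ! g j)"
  proof (intro allI impI)
    fix j assume "j < length (x#xs)"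
    then show "g j < length (y#ys) \<and> letter_le ((x#xs) ! j) ((y#ys) ! g j)"
      using f(2) list_emb_Cons2(1) by (cases j) (auto simp: g_def)
  qed
  ultimately show ?case unfolding word_le_def by blast
qed

lemma word_le_emb: "word_le u v \<Longrightarrow> list_emb letter_le u v"
proof (induction v arbitrary: u)
  case Nil
  then show ?case unfolding word_le_def by (cases u) auto
next
  case (Cons b v)
  show ?case
  proof (cases u)
    case Nil then show ?thesis by simp
  next
    fix a u' assume uc: "u = a # u'"
    from Cons.prems obtain f where f: "strict_mono_on {..<length u} f"
      "\<forall>j<length u. f j < length (b#v) \<and> letter_le (u ! j) ((b#v) ! f j)" unfolding word_le_def by blast
    have fmono: "f i < f j" if "i < j" "j < length u" for i j
      using f(1) that by (auto simp: strict_mono_on_def)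
    show ?thesis
    proof (cases "f 0 = 0")
      case True
      have ab: "letter_le a b" using f(2)[rule_format, of 0] uc True by simp
      have pos: "0 < f (Suc j)" if "j < length u'" for j using fmono[of 0 "Suc j"] that uc True by simp
      have "word_le u' v" unfolding word_le_def
      proof (intro exI[of _ "\<lambda>j. f (Suc j) - 1"] conjI allI impI)
        show "strict_mono_on {..<length u'} (\<lambda>j. f (Suc j) - 1)"
          unfolding strict_mono_on_def
        proof (intro allI impI)
          fix i j assume "i \<in> {..<length u'} \<and> j \<in> {..<length u'} \<and> i < j"
          then show "f (Suc i) - 1 < f (Suc j) - 1" using fmono[of "Suc i" "Suc j"] pos[of i] uc by auto
        qed
        fix j assume j: "j < length u'"
        have "f (Suc j) < length (b#v)" "letter_le (u ! Suc j) ((b#v) ! f (Suc j))"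
          using f(2)[rule_format, of "Suc j"] j uc by auto
        then show "f (Suc j) - 1 < length v" "letter_le (u' ! j) (v ! (f (Suc j) - 1))"
          using pos[OF j] uc by (cases "f (Suc j)"; auto)+
      qed
      then show ?thesis using Cons.IH ab uc by auto
    next
      case False
      have pos: "0 < f j" if "j < length u" for j
        using fmono[of 0 j] that False by (cases j) auto
      have "word_le u v" unfolding word_le_def
      proof (intro exI[of _ "\<lambda>j. f j - 1"] conjI allI impI)
        show "strict_mono_on {..<length u} (\<lambda>j. f j - 1)"
          unfolding strict_mono_on_def
        proof (intro allI impI)
          fix i j assume "i \<in> {..<length u} \<and> j \<in> {..<length u} \<and> i < j"
          then show "f i - 1 < f j - 1" using fmono[of i j] pos[of i] by auto
        qed
        fix j assume j: "j < length u"
        have "f j < length (b#v)" "letter_le (u ! j) ((b#v) ! f j)"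
          using f(2)[rule_format, of j] j by auto
        then show "f j - 1 < length v" "letter_le (u ! j) (v ! (f j - 1))"
          using pos[OF j] by (cases "f j"; auto)+
      qed
      then show ?thesis using Cons.IH by auto
    qed
  qed
qed

lemma word_le_iff: "word_le u v \<longleftrightarrow> list_emb letter_le u v"
  using emb_word_le word_le_emb by blast

lemma part2:
  fixes x :: "nat \<Rightarrow> nat list list"
  assumes "\<forall>i. \<forall>v\<in>set (x i). length v = r"
  shows "\<exists>i j. i < j \<and> word_le (x i) (x j)"
proof -
  have "\<forall>i. x i \<in> lists {v. length v = r}" using assms by auto
  then have "good (list_emb letter_le) x"
    using higman[OF wqo_letters] unfolding wqo_on_def by blast
  then show ?thesis unfolding good_def word_le_iff .
qed



lemma count_rep: "count_list (replicate n x) y = (if x = y then n else 0)"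
  by (induction n) auto

lemma supp_basis: "supp (basis i :: idx \<Rightarrow> 'k::comm_ring_1) = {i}"
  unfolding supp_def basis_def by auto

lemma basis_alg: "valid_idx r i \<Longrightarrow> (basis i :: idx \<Rightarrow> 'k::comm_ring_1) \<in> alg r"
proof -
  assume v: "valid_idx r i"
  have "supp (basis i :: idx \<Rightarrow> 'k) = {i}" by (rule supp_basis)
  then have "finite (supp (basis i :: idx \<Rightarrow> 'k))" by simp
  then show ?thesis unfolding alg_def using v by (auto simp: basis_def)
qed

lemma shuffle_basis:
  assumes "fst p = fst q" "length (snd p) = count_list bs True" "length (snd q) = count_list bs False"
  shows "shuffle_prod bs (basis p) (basis q) = (basis (fst q, merge bs (snd p) (snd q)) :: idx \<Rightarrow> 'k::comm_ring_1)"
proof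
  fix x :: idx
  obtain e w where x: "x = (e, w)" by (cases x)
  show "shuffle_prod bs (basis p) (basis q) x = (basis (fst q, merge bs (snd p) (snd q)) :: idx \<Rightarrow> 'k) x"
    unfolding x shuffle_prod_def supp_basis using assms by (auto simp: basis_def)
qed

lemma star_basis:
  assumes "length (snd p) = length (snd q)"
  shows "star_prod (basis p) (basis q) = (basis (fst p + fst q, map2 (\<lambda>a b. map2 (+) a b) (snd p) (snd q)) :: idx \<Rightarrow> 'k::comm_ring_1)"
proof
  fix x :: idx
  obtain e w where x: "x = (e, w)" by (cases x)
  show "star_prod (basis p) (basis q) x = (basis (fst p + fst q, map2 (\<lambda>a b. map2 (+) a b) (snd p) (snd q)) :: idx \<Rightarrow> 'k) x"
    unfolding x star_prod_def supp_basis using assms by (auto simp: basis_def)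
qed

lemma merge_ins:
  "length us = k \<Longrightarrow> length vs = l \<Longrightarrow>
   merge (replicate k False @ True # replicate l False) [c] (us @ vs) = us @ c # vs"
proof (induction us arbitrary: k)
  case Nil
  have "merge (replicate l False) [] vs = vs" if "length vs = l" for vs :: "'a list"
    using that by (induction vs arbitrary: l) auto
  then show ?case using Nil by simp
next
  case (Cons u us)
  then obtain k' where "k = Suc k'" by (cases k) auto
  then show ?case using Cons by simp
qed

lemma sum_list_map2_plus: "length a = length b \<Longrightarrow> sum_list (map2 (+) a b) = sum_list a + sum_list (b :: nat list)"
  by (induction a b rule: list_induct2) auto

lemma sum_list_le: "list_all2 (\<le>) a b \<Longrightarrow> sum_list a \<le> sum_list (b :: nat list)"
  by (induction rule: list_all2_induct) auto

lemma sub_letter: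
  assumes "list_all2 (\<le>) a (b :: nat list)"
  shows "map2 (+) (map2 (-) b a) a = b" "sum_list (map2 (-) b a) = sum_list b - sum_list a"
    "length (map2 (-) b a) = length b"
  using assms
proof (induction rule: list_all2_induct)
  case Nil
  { case 1 show ?case by simp }
  { case 2 show ?case by simp }
  { case 3 show ?case by simp }
next
  case (Cons x xs y ys)
  { case 1 show ?case using Cons by simp }
  { case 2 show ?case using Cons sum_list_le[OF Cons(2)] by simp }
  { case 3 show ?case using Cons by (simp add: list_all2_lengthD) }
qed

fun lower :: "nat list \<Rightarrow> nat \<Rightarrow> nat list" where
  "lower [] d = []"
| "lower (a # as) d = min a d # lower as (d - min a d)"

lemma lower_props: "length (lower y d) = length y \<and> list_all2 (\<le>) (lower y d) y \<and> sum_list (lower y d) = min d (sum_list y)"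
  by (induction y arbitrary: d) auto



lemma sum_nz: "sum h A \<noteq> (0::'a::comm_monoid_add) \<Longrightarrow> \<exists>a\<in>A. h a \<noteq> 0"
  by (meson sum.neutral)

lemma star_nz:
  assumes "star_prod g f (c, w) \<noteq> (0::'k::comm_ring_1)"
  shows "\<exists>p\<in>supp g. \<exists>q\<in>supp f. length (snd p) = length (snd q) \<and> fst p + fst q = c
           \<and> map2 (\<lambda>a b. map2 (+) a b) (snd p) (snd q) = w"
proof -
  have s0: "(\<Sum>p\<in>supp g. \<Sum>q\<in>supp f. if length (snd p) = length (snd q) \<and> fst p + fst q = c
        \<and> map2 (\<lambda>a b. map2 (+) a b) (snd p) (snd q) = w then g p * f q else 0) \<noteq> 0"
    using assms unfolding star_prod_def by simp
  from sum_nz[OF s0] obtain p where p: "p \<in> supp g" and s1: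
    "(\<Sum>q\<in>supp f. if length (snd p) = length (snd q) \<and> fst p + fst q = c
        \<and> map2 (\<lambda>a b. map2 (+) a b) (snd p) (snd q) = w then g p * f q else 0) \<noteq> 0"
    by blast
  from sum_nz[OF s1] obtain q where "q \<in> supp f" "(if length (snd p) = length (snd q) \<and> fst p + fst q = c
        \<and> map2 (\<lambda>a b. map2 (+) a b) (snd p) (snd q) = w then g p * f q else 0) \<noteq> 0"
    by blast
  then show ?thesis using p by (auto split: if_splits)
qed

lemma shuffle_nz:
  assumes "shuffle_prod bs g f (e, w) \<noteq> (0::'k::comm_ring_1)"
  shows "\<exists>p\<in>supp g. \<exists>q\<in>supp f. fst p = e \<and> fst q = e \<and> length (snd p) = count_list bs True
        \<and> length (snd q) = count_list bs False \<and> merge bs (snd p) (snd q) = w"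
proof -
  have s0: "(\<Sum>p\<in>supp g. \<Sum>q\<in>supp f. if fst p = e \<and> fst q = e \<and> length (snd p) = count_list bs True
        \<and> length (snd q) = count_list bs False \<and> merge bs (snd p) (snd q) = w
     then g p * f q else 0) \<noteq> 0"
    using assms unfolding shuffle_prod_def by simp
  from sum_nz[OF s0] obtain p where p: "p \<in> supp g" and s1:
    "(\<Sum>q\<in>supp f. if fst p = e \<and> fst q = e \<and> length (snd p) = count_list bs True
        \<and> length (snd q) = count_list bs False \<and> merge bs (snd p) (snd q) = w
     then g p * f q else 0) \<noteq> 0"
    by blast
  from sum_nz[OF s1] obtain q where "q \<in> supp f" "(if fst p = e \<and> fst q = e \<and> length (snd p) = count_list bs True
        \<and> length (snd q) = count_list bs False \<and> merge bs (snd p) (snd q) = w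
     then g p * f q else 0) \<noteq> 0"
    by blast
  then show ?thesis using p by (auto split: if_splits)
qed

lemma merge_set: "set (merge bs xs ys) \<subseteq> set xs \<union> set ys"
  by (induction bs xs ys rule: merge.induct) auto

lemma alg_valid: "f \<in> alg r \<Longrightarrow> p \<in> supp f \<Longrightarrow> valid_idx r p"
  unfolding alg_def supp_def by (cases p) auto

lemma valid_map2:
  assumes "valid_idx r p" "valid_idx r q" "length (snd p) = length (snd q)"
  shows "valid_idx r (fst p + fst q, map2 (\<lambda>a b. map2 (+) a b) (snd p) (snd q))"
  unfolding valid_idx_def
proof (intro ballI, simp only: fst_conv snd_conv)
  fix v assume "v \<in> set (map2 (\<lambda>a b. map2 (+) a b) (snd p) (snd q))"
  then obtain a b where ab: "(a, b) \<in> set (zip (snd p) (snd q))" "v = map2 (+) a b" by auto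
  have "a \<in> set (snd p)" "b \<in> set (snd q)" using ab(1) by (auto dest: set_zip_leftD set_zip_rightD)
  then have "length a = r" "sum_list a = fst p" "length b = r" "sum_list b = fst q"
    using assms unfolding valid_idx_def by auto
  then show "length v = r \<and> sum_list v = fst p + fst q" using ab(2) sum_list_map2_plus[of a b] by simp
qed

lemma star_alg:
  assumes g: "g \<in> alg r" and f: "f \<in> alg r"
  shows "star_prod g f \<in> (alg r :: (idx \<Rightarrow> 'k::comm_ring_1) set)"
proof -
  let ?h = "\<lambda>(p, q). (fst p + fst q, map2 (\<lambda>a b. map2 (+) a b) (snd p) (snd q))"
  have sub: "supp (star_prod g f) \<subseteq> ?h ` (supp g \<times> supp f)"
  proof
    fix i assume "i \<in> supp (star_prod g f)"
    then obtain c w where i: "i = (c, w)" "star_prod g f (c, w) \<noteq> 0" unfolding supp_def by (cases i) auto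
    from star_nz[OF i(2)] obtain p q where "p \<in> supp g" "q \<in> supp f" "fst p + fst q = c"
      "map2 (\<lambda>a b. map2 (+) a b) (snd p) (snd q) = w" by blast
    then show "i \<in> ?h ` (supp g \<times> supp f)" using i(1) by force
  qed
  have fin: "finite (supp g)" "finite (supp f)" using g f unfolding alg_def by auto
  have "finite (supp (star_prod g f))" by (rule finite_subset[OF sub]) (use fin in auto)
  moreover have "valid_idx r i" if "star_prod g f i \<noteq> 0" for i
  proof -
    obtain c w where i: "i = (c, w)" by (cases i)
    from star_nz[OF that[unfolded i]] obtain p q where pq: "p \<in> supp g" "q \<in> supp f"
      "length (snd p) = length (snd q)" "fst p + fst q = c"
      "map2 (\<lambda>a b. map2 (+) a b) (snd p) (snd q) = w" by blast
    show ?thesis using valid_map2[OF alg_valid[OF g pq(1)] alg_valid[OF f pq(2)] pq(3)] pq(4,5) i by simp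
  qed
  ultimately show ?thesis unfolding alg_def by auto
qed

lemma shuffle_alg:
  assumes g: "g \<in> alg r" and f: "f \<in> alg r"
  shows "shuffle_prod bs g f \<in> (alg r :: (idx \<Rightarrow> 'k::comm_ring_1) set)"
proof -
  let ?h = "\<lambda>(p, q). (fst q, merge bs (snd p) (snd q))"
  have sub: "supp (shuffle_prod bs g f) \<subseteq> ?h ` (supp g \<times> supp f)"
  proof
    fix i assume "i \<in> supp (shuffle_prod bs g f)"
    then obtain c w where i: "i = (c, w)" "shuffle_prod bs g f (c, w) \<noteq> 0" unfolding supp_def by (cases i) auto
    from shuffle_nz[OF i(2)] obtain p q where "p \<in> supp g" "q \<in> supp f" "fst q = c"
      "merge bs (snd p) (snd q) = w" by blast
    then show "i \<in> ?h ` (supp g \<times> supp f)" using i(1) by force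
  qed
  have fin: "finite (supp g)" "finite (supp f)" using g f unfolding alg_def by auto
  have "finite (supp (shuffle_prod bs g f))" by (rule finite_subset[OF sub]) (use fin in auto)
  moreover have "valid_idx r i" if "shuffle_prod bs g f i \<noteq> 0" for i
  proof -
    obtain c w where i: "i = (c, w)" by (cases i)
    from shuffle_nz[OF that[unfolded i]] obtain p q where pq: "p \<in> supp g" "q \<in> supp f"
      "fst p = c" "fst q = c" "merge bs (snd p) (snd q) = w" by blast
    have "valid_idx r p" "valid_idx r q" using alg_valid[OF g pq(1)] alg_valid[OF f pq(2)] by auto
    then show ?thesis using merge_set[of bs "snd p" "snd q"] pq(3-5) i unfolding valid_idx_def by auto
  qed
  ultimately show ?thesis unfolding alg_def by auto
qed

lemma emb_merge:
  "list_emb P u ys \<Longrightarrow> length xs = count_list bs True \<Longrightarrow> length ys = count_list bs False \<Longrightarrow>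
   list_emb P u (merge bs xs ys)"
proof (induction bs xs ys arbitrary: u rule: merge.induct)
  case (1 xs ys)
  then show ?case by simp
next
  case (2 bs x xs ys)
  then show ?case by auto
next
  case (3 bs xs y ys)
  show ?case
  proof (cases u)
    case Nil then show ?thesis by simp
  next
    case (Cons a u')
    show ?thesis
    proof (cases "P a y")
      case True
      then have "list_emb P u' ys" using "3.prems"(1) Cons by simp
      then have "list_emb P u' (merge bs xs ys)" using "3.IH"[of u'] "3.prems" by simp
      then show ?thesis using True Cons by simp
    next
      case False
      then have "list_emb P u ys" using "3.prems"(1) Cons by simp
      then have "list_emb P u (merge bs xs ys)" using "3.IH"[of u] "3.prems" by simp
      then show ?thesis by (simp add: list_emb_Cons)
    qed
  qed
next
  case (4 bs ys)
  then show ?case by simp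
next
  case (5 bs xs)
  then show ?case by simp
qed

lemma letter_le_add: "letter_le a b \<Longrightarrow> length c = length b \<Longrightarrow> letter_le a (map2 (+) c b)"
  unfolding letter_le_def
proof (induction a b arbitrary: c rule: list_all2_induct)
  case Nil then show ?case by simp
next
  case (Cons x xs y ys)
  then obtain z zs where "c = z # zs" by (cases c) auto
  then show ?case using Cons by auto
qed

lemma emb_star:
  "list_emb letter_le u ws \<Longrightarrow> length vs = length ws \<Longrightarrow> (\<forall>c\<in>set vs. length c = r) \<Longrightarrow>
   (\<forall>c\<in>set ws. length c = r) \<Longrightarrow> list_emb letter_le u (map2 (\<lambda>a b. map2 (+) a b) vs ws)"
proof (induction u ws arbitrary: vs rule: list_emb.induct)
  case (list_emb_Nil ys)
  then show ?case by simp
next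
  case (list_emb_Cons xs ys y)
  then obtain v vs' where "vs = v # vs'" by (cases vs) auto
  then show ?case using list_emb_Cons by auto
next
  case (list_emb_Cons2 x y xs ys)
  then obtain v vs' where vs: "vs = v # vs'" by (cases vs) auto
  have "letter_le x (map2 (+) v y)" using letter_le_add[OF list_emb_Cons2(1)] list_emb_Cons2(5,6) vs by simp
  then show ?case using list_emb_Cons2 vs by auto
qed



definition Iw :: "nat \<Rightarrow> nat list list \<Rightarrow> (idx \<Rightarrow> 'k::comm_ring_1) set" where
  "Iw r w = {f \<in> alg r. \<forall>i. f i \<noteq> 0 \<longrightarrow> list_emb letter_le w (snd i)}"

lemma Iw_ideal: "is_ideal r (Iw r w :: (idx \<Rightarrow> 'k::comm_ring_1) set)"
  unfolding is_ideal_def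
proof (intro conjI ballI allI)
  show "Iw r w \<subseteq> alg r" unfolding Iw_def by auto
  show "(\<lambda>_. 0) \<in> (Iw r w :: (idx \<Rightarrow> 'k) set)" unfolding Iw_def alg_def supp_def by simp
next
  fix f g :: "idx \<Rightarrow> 'k" assume f: "f \<in> Iw r w" and g: "g \<in> Iw r w"
  have "supp (\<lambda>i. f i + g i) \<subseteq> supp f \<union> supp g" unfolding supp_def by auto
  moreover have "finite (supp f)" "finite (supp g)" using f g unfolding Iw_def alg_def by auto
  ultimately have "finite (supp (\<lambda>i. f i + g i))" by (meson finite_Un finite_subset)
  moreover have "valid_idx r i \<and> list_emb letter_le w (snd i)" if "f i + g i \<noteq> 0" for i
  proof -
    have "f i \<noteq> 0 \<or> g i \<noteq> 0" using that by auto
    then show ?thesis using f g unfolding Iw_def alg_def by blast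
  qed
  ultimately show "(\<lambda>i. f i + g i) \<in> Iw r w" using f g unfolding Iw_def alg_def by auto
next
  fix f :: "idx \<Rightarrow> 'k" and c :: 'k assume f: "f \<in> Iw r w"
  have "supp (\<lambda>i. c * f i) \<subseteq> supp f" unfolding supp_def by auto
  moreover have "finite (supp f)" using f unfolding Iw_def alg_def by auto
  ultimately have "finite (supp (\<lambda>i. c * f i))" by (meson finite_subset)
  moreover have "valid_idx r i \<and> list_emb letter_le w (snd i)" if "c * f i \<noteq> 0" for i
  proof -
    have "f i \<noteq> 0" using that by auto
    then show ?thesis using f unfolding Iw_def alg_def by blast
  qed
  ultimately show "(\<lambda>i. c * f i) \<in> Iw r w" using f unfolding Iw_def alg_def by auto
next
  fix f :: "idx \<Rightarrow> 'k" and d n assume f: "f \<in> Iw r w"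
  have "supp (component d n f) \<subseteq> supp f" unfolding supp_def component_def by auto
  moreover have "finite (supp f)" using f unfolding Iw_def alg_def by auto
  ultimately have "finite (supp (component d n f))" by (meson finite_subset)
  then show "component d n f \<in> Iw r w" using f unfolding Iw_def alg_def component_def
    by (auto split: if_splits)
next
  fix f g :: "idx \<Rightarrow> 'k" assume f: "f \<in> Iw r w" and g: "g \<in> alg r"
  have fa: "f \<in> alg r" using f unfolding Iw_def by auto
  have "list_emb letter_le w (snd i)" if "star_prod g f i \<noteq> 0" for i
  proof -
    obtain c v where i: "i = (c, v)" by (cases i)
    from star_nz[OF that[unfolded i]] obtain p q where pq: "p \<in> supp g" "q \<in> supp f"
      "length (snd p) = length (snd q)" "map2 (\<lambda>a b. map2 (+) a b) (snd p) (snd q) = v" by blast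
    have "f q \<noteq> 0" using pq(2) unfolding supp_def by auto
    then have e: "list_emb letter_le w (snd q)" using f unfolding Iw_def by blast
    have "valid_idx r p" "valid_idx r q" using alg_valid[OF g pq(1)] alg_valid[OF fa pq(2)] by auto
    then have "\<forall>c\<in>set (snd p). length c = r" "\<forall>c\<in>set (snd q). length c = r" unfolding valid_idx_def by auto
    from emb_star[OF e pq(3) this] show ?thesis using pq(4) i by simp
  qed
  then show "star_prod g f \<in> Iw r w" using star_alg[OF g fa] unfolding Iw_def by auto
next
  fix f g :: "idx \<Rightarrow> 'k" and bs assume f: "f \<in> Iw r w" and g: "g \<in> alg r"
  have fa: "f \<in> alg r" using f unfolding Iw_def by auto
  have "list_emb letter_le w (snd i)" if "shuffle_prod bs g f i \<noteq> 0" for i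
  proof -
    obtain c v where i: "i = (c, v)" by (cases i)
    from shuffle_nz[OF that[unfolded i]] obtain p q where pq: "p \<in> supp g" "q \<in> supp f"
      "length (snd p) = count_list bs True" "length (snd q) = count_list bs False"
      "merge bs (snd p) (snd q) = v" by blast
    have "f q \<noteq> 0" using pq(2) unfolding supp_def by auto
    then have e: "list_emb letter_le w (snd q)" using f unfolding Iw_def by blast
    from emb_merge[OF e pq(3) pq(4)] show ?thesis using pq(5) i by simp
  qed
  then show "shuffle_prod bs g f \<in> Iw r w" using shuffle_alg[OF g fa] unfolding Iw_def by auto
qed

lemma ins_letter:
  assumes I: "is_ideal r I" and b: "basis (d, us @ vs) \<in> (I :: (idx \<Rightarrow> 'k::comm_ring_1) set)"
    and c: "length c = r" "sum_list c = d"
  shows "basis (d, us @ c # vs) \<in> I"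
proof -
  define bs where "bs = replicate (length us) False @ True # replicate (length vs) False"
  have ga: "(basis (d, [c]) :: idx \<Rightarrow> 'k) \<in> alg r" by (rule basis_alg) (use c in \<open>simp add: valid_idx_def\<close>)
  have "shuffle_prod bs (basis (d, [c])) (basis (d, us @ vs)) \<in> I" using I b ga unfolding is_ideal_def by blast
  moreover have "shuffle_prod bs (basis (d, [c])) (basis (d, us @ vs)) = (basis (d, merge bs [c] (us @ vs)) :: idx \<Rightarrow> 'k)"
    by (rule shuffle_basis[where p="(d, [c])" and q="(d, us @ vs)", simplified]) (simp_all add: bs_def count_rep)
  moreover have "merge bs [c] (us @ vs) = us @ c # vs" unfolding bs_def by (rule merge_ins) auto
  ultimately show ?thesis by simp
qed

lemma lower_letter:
  assumes "length y = r" "d \<le> sum_list y"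
  shows "length (lower y d) = r \<and> sum_list (lower y d) = d \<and> letter_le (lower y d) y"
  using lower_props[of y d] assms unfolding letter_le_def by auto

lemma pad_nil:
  assumes I: "is_ideal r I"
  shows "(\<forall>c\<in>set ys. length c = r \<and> d \<le> sum_list c) \<Longrightarrow> basis (d, pre) \<in> (I :: (idx \<Rightarrow> 'k::comm_ring_1) set) \<Longrightarrow>
    \<exists>w''. length w'' = length ys \<and> list_all2 letter_le w'' ys \<and> (\<forall>c\<in>set w''. length c = r \<and> sum_list c = d)
     \<and> basis (d, pre @ w'') \<in> I"
proof (induction ys arbitrary: pre)
  case Nil
  then show ?case by simp
next
  case (Cons y ys)
  define c where "c = lower y d"
  have c: "length c = r" "sum_list c = d" "letter_le c y" using lower_letter Cons.prems(1) unfolding c_def by auto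
  have "basis (d, pre @ c # []) \<in> I" using ins_letter[OF I _ c(1,2), of pre "[]"] Cons.prems(2) by simp
  then obtain w'' where w: "length w'' = length ys" "list_all2 letter_le w'' ys"
    "\<forall>c\<in>set w''. length c = r \<and> sum_list c = d" "basis (d, (pre @ [c]) @ w'') \<in> I"
    using Cons.IH[of "pre @ [c]"] Cons.prems(1) by auto
  show ?case using w c by (intro exI[of _ "c # w''"]) auto
qed

lemma pad:
  assumes I: "is_ideal r I"
  shows "list_emb letter_le w w' \<Longrightarrow> (\<forall>c\<in>set w. length c = r \<and> sum_list c = d) \<Longrightarrow>
    (\<forall>c\<in>set w'. length c = r \<and> d \<le> sum_list c) \<Longrightarrow> basis (d, pre @ w) \<in> (I :: (idx \<Rightarrow> 'k::comm_ring_1) set) \<Longrightarrow>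
    \<exists>w''. length w'' = length w' \<and> list_all2 letter_le w'' w' \<and> (\<forall>c\<in>set w''. length c = r \<and> sum_list c = d)
     \<and> basis (d, pre @ w'') \<in> I"
proof (induction w w' arbitrary: pre rule: list_emb.induct)
  case (list_emb_Nil ys)
  then show ?case using pad_nil[OF I, of ys d pre] by simp
next
  case (list_emb_Cons xs ys y)
  define c where "c = lower y d"
  have c: "length c = r" "sum_list c = d" "letter_le c y" using lower_letter list_emb_Cons.prems(2) unfolding c_def by auto
  have "basis (d, pre @ c # xs) \<in> I" using ins_letter[OF I list_emb_Cons.prems(3) c(1,2)] .
  then obtain w'' where w: "length w'' = length ys" "list_all2 letter_le w'' ys"
    "\<forall>c\<in>set w''. length c = r \<and> sum_list c = d" "basis (d, (pre @ [c]) @ w'') \<in> I"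
    using list_emb_Cons.IH[of "pre @ [c]"] list_emb_Cons.prems by auto
  show ?case using w c by (intro exI[of _ "c # w''"]) auto
next
  case (list_emb_Cons2 x y xs ys)
  obtain w'' where w: "length w'' = length ys" "list_all2 letter_le w'' ys"
    "\<forall>c\<in>set w''. length c = r \<and> sum_list c = d" "basis (d, (pre @ [x]) @ w'') \<in> I"
    using list_emb_Cons2.IH[of "pre @ [x]"] list_emb_Cons2.prems by auto
  show ?case using w list_emb_Cons2.prems(1) list_emb_Cons2.hyps(1) by (intro exI[of _ "x # w''"]) auto
qed

lemma subw:
  "list_all2 letter_le u w \<Longrightarrow> (\<forall>c\<in>set w. length c = r \<and> sum_list c = d') \<Longrightarrow> (\<forall>c\<in>set u. sum_list c = d) \<Longrightarrow>
   map2 (\<lambda>a b. map2 (+) a b) (map2 (\<lambda>a b. map2 (-) a b) w u) u = w \<and>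
   length (map2 (\<lambda>a b. map2 (-) a b) w u) = length w \<and>
   (\<forall>c\<in>set (map2 (\<lambda>a b. map2 (-) a b) w u). length c = r \<and> sum_list c = d' - d)"
proof (induction rule: list_all2_induct)
  case Nil then show ?case by simp
next
  case (Cons x xs y ys)
  have xy: "list_all2 (\<le>) x y" using Cons(1) unfolding letter_le_def .
  show ?case using Cons sub_letter[OF xy] by auto
qed



lemma part1:
  assumes vw: "valid_idx r (d, w)" and vw': "valid_idx r (d', w')" and dd: "w \<noteq> [] \<or> d \<le> d'"
  shows "mono_le r (basis (d, w) :: idx \<Rightarrow> 'k::comm_ring_1) (basis (d', w')) \<longleftrightarrow> word_le w w'"
proof
  assume m: "mono_le r (basis (d, w) :: idx \<Rightarrow> 'k) (basis (d', w'))"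
  have refl: "list_emb letter_le w w" by (rule list_emb_refl) (simp add: letter_le_def list.rel_refl)
  have "(basis (d, w) :: idx \<Rightarrow> 'k) \<in> Iw r w"
    unfolding Iw_def using basis_alg[OF vw] refl by (auto simp: basis_def)
  then have "(basis (d', w') :: idx \<Rightarrow> 'k) \<in> Iw r w"
    using m Iw_ideal[of r w] unfolding mono_le_def ideal_gen_def by blast
  moreover have "(basis (d', w') :: idx \<Rightarrow> 'k) (d', w') \<noteq> 0" by (simp add: basis_def)
  ultimately have "list_emb letter_le w w'" unfolding Iw_def by fastforce
  then show "word_le w w'" using word_le_iff by blast
next
  assume "word_le w w'"
  then have e: "list_emb letter_le w w'" using word_le_iff by blast
  have wl: "\<forall>c\<in>set w. length c = r \<and> sum_list c = d" using vw unfolding valid_idx_def by auto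
  have wl': "\<forall>c\<in>set w'. length c = r \<and> sum_list c = d'" using vw' unfolding valid_idx_def by auto
  have dd': "d \<le> d'"
  proof (cases "w = []")
    case True then show ?thesis using dd by simp
  next
    case False
    then obtain a where a: "a \<in> set w" by (cases w) auto
    obtain b where b: "b \<in> set w'" "letter_le a b" using list_emb_set[OF e a] by blast
    have "sum_list a \<le> sum_list b" using b(2) sum_list_le unfolding letter_le_def by blast
    then show ?thesis using wl wl' a b(1) by auto
  qed
  show "mono_le r (basis (d, w) :: idx \<Rightarrow> 'k) (basis (d', w'))"
    unfolding mono_le_def ideal_gen_def
  proof (rule InterI)
    fix I :: "(idx \<Rightarrow> 'k) set" assume "I \<in> {I. is_ideal r I \<and> {basis (d, w)} \<subseteq> I}"
    then have I: "is_ideal r I" and bI: "basis (d, w) \<in> I" by auto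
    have wl'': "\<forall>c\<in>set w'. length c = r \<and> d \<le> sum_list c" using wl' dd' by auto
    obtain w'' where w: "length w'' = length w'" "list_all2 letter_le w'' w'"
      "\<forall>c\<in>set w''. length c = r \<and> sum_list c = d" "basis (d, [] @ w'') \<in> I"
      using pad[OF I e wl wl'', of "[]"] bI by auto
    define v where "v = map2 (\<lambda>a b. map2 (-) a b) w' w''"
    have sw: "map2 (\<lambda>a b. map2 (+) a b) v w'' = w'" "length v = length w'"
      "\<forall>c\<in>set v. length c = r \<and> sum_list c = d' - d"
    proof -
      have "\<forall>c\<in>set w''. sum_list c = d" using w(3) by auto
      note S = subw[OF w(2) wl' this]
      show "map2 (\<lambda>a b. map2 (+) a b) v w'' = w'" using S unfolding v_def by blast
      show "length v = length w'" using S unfolding v_def by blast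
      show "\<forall>c\<in>set v. length c = r \<and> sum_list c = d' - d" using S unfolding v_def by blast
    qed
    have va: "(basis (d' - d, v) :: idx \<Rightarrow> 'k) \<in> alg r"
      by (rule basis_alg) (use sw(3) in \<open>simp add: valid_idx_def\<close>)
    have "star_prod (basis (d' - d, v)) (basis (d, w'')) \<in> I"
      using I w(4) va unfolding is_ideal_def by auto
    moreover have "star_prod (basis (d' - d, v)) (basis (d, w'')) = (basis (d' - d + d, map2 (\<lambda>a b. map2 (+) a b) v w'') :: idx \<Rightarrow> 'k)"
      using star_basis[where p="(d' - d, v)" and q="(d, w'')"] sw(2) w(1) by simp
    ultimately show "basis (d', w') \<in> I" using sw(1) dd' by simp
  qed
qed

theorem proposition2p4:
  fixes r :: nat
  assumes "0 < r" and "noetherian_ring TYPE('k::comm_ring_1)"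
  shows "(\<forall>d w d' w'. valid_idx r (d, w) \<longrightarrow> valid_idx r (d', w') \<longrightarrow> (w \<noteq> [] \<or> d \<le> d') \<longrightarrow>
            (mono_le r (basis (d, w) :: idx \<Rightarrow> 'k) (basis (d', w')) \<longleftrightarrow> word_le w w'))
       \<and> (\<forall>x :: nat \<Rightarrow> nat list list. (\<forall>i. \<forall>v\<in>set (x i). length v = r) \<longrightarrow>
            (\<exists>i j. i < j \<and> word_le (x i) (x j)))"
proof (intro conjI allI impI)
  fix d w d' w' assume "valid_idx r (d, w)" "valid_idx r (d', w')" "w \<noteq> [] \<or> d \<le> d'"
  then show "mono_le r (basis (d, w) :: idx \<Rightarrow> 'k) (basis (d', w')) \<longleftrightarrow> word_le w w'"
    by (rule part1)
next
  fix x :: "nat \<Rightarrow> nat list list" assume "\<forall>i. \<forall>v\<in>set (x i). length v = r"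
  then show "\<exists>i j. i < j \<and> word_le (x i) (x j)" by (rule part2)
qed

end
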